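(* Let $X$ be a space such that every countable family of closed non-Lindelöf subsets of $X$ has non-Lindelöf intersection. Let $\kappa$ be the linear Lindelöf number of $X$, and let $Y$ be a regular $[\aleph_0,\kappa]$-compact space with $G_\delta$ points. Then $\mathsf{EC}(X,Y)$ holds.
   Context: All spaces are Hausdorff and maps continuous. The linear Lindelöf number of $X$ is the least $\kappa$ such that every cover of $X$ by open sets linearly ordered by inclusion has a subcover of cardinality $\le\kappa$. A space is $[\aleph_0,\kappa]$-compact if every open cover of cardinality $\le\kappa$ has a countable subcover. For a non-Lindelöf space $X$, $\mathsf{EC}(X,Y)$ means: for every continuous $f:X\to Y$ there is a Lindelöf $Z\subset X$ with $f(X\setminus Z)$ a singleton (for Lindelöf $X$ it is regarded as trivially true). *)

theory Defs
  imports "HOL-Analysis.Analysis" "HOL-Library.Equipollence"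
begin

definition Lindelof_in :: "'a topology \<Rightarrow> 'a set \<Rightarrow> bool" where
  "Lindelof_in X Z \<longleftrightarrow> Z \<subseteq> topspace X \<and> Lindelof_space (subtopology X Z)"

definition linear_cover_bound :: "'a topology \<Rightarrow> 'k set \<Rightarrow> bool" where
  "linear_cover_bound X K \<longleftrightarrow>
     (\<forall>\<U>. (\<forall>U\<in>\<U>. openin X U) \<and> \<Union>\<U> = topspace X \<and>
           (\<forall>A\<in>\<U>. \<forall>B\<in>\<U>. A \<subseteq> B \<or> B \<subseteq> A)
        \<longrightarrow> (\<exists>\<V>. \<V> \<subseteq> \<U> \<and> \<Union>\<V> = topspace X \<and> \<V> \<lesssim> K))"

text \<open>The cardinality of K is the linear Lindelof number of X: K is a bound, and
  K is below every bound (bounds are compared among sets of type 'a set set, which is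
  enough since every subcover is such a set).\<close>
definition is_linear_Lindelof_number :: "'a topology \<Rightarrow> 'k set \<Rightarrow> bool" where
  "is_linear_Lindelof_number X K \<longleftrightarrow>
     linear_cover_bound X K \<and>
     (\<forall>K' :: 'a set set. linear_cover_bound X K' \<longrightarrow> K \<lesssim> K')"

definition aleph0_kappa_compact :: "'b topology \<Rightarrow> 'k set \<Rightarrow> bool" where
  "aleph0_kappa_compact Y K \<longleftrightarrow>
     (\<forall>\<U>. (\<forall>U\<in>\<U>. openin Y U) \<and> \<Union>\<U> = topspace Y \<and> \<U> \<lesssim> K
        \<longrightarrow> (\<exists>\<V>. countable \<V> \<and> \<V> \<subseteq> \<U> \<and> \<Union>\<V> = topspace Y))"

definition G_delta_points :: "'b topology \<Rightarrow> bool" where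
  "G_delta_points Y \<longleftrightarrow> (\<forall>y\<in>topspace Y. gdelta_in Y {y})"

definition EC :: "'a topology \<Rightarrow> 'b topology \<Rightarrow> bool" where
  "EC X Y \<longleftrightarrow> (\<not> Lindelof_space X \<longrightarrow>
     (\<forall>f. continuous_map X Y f \<longrightarrow>
        (\<exists>Z. Lindelof_in X Z \<and> (\<exists>y. f ` (topspace X - Z) = {y}))))"

end

theory Submission
  imports Defs
begin




lemma Lin_Union:
  assumes "countable \<U>" "\<And>U. U \<in> \<U> \<Longrightarrow> Lindelof_in X U"
  shows "Lindelof_in X (\<Union>\<U>)"
  using assms Lindelof_space_Union[of \<U> X] unfolding Lindelof_in_def by blast

lemma Lin_Un:
  assumes "Lindelof_in X A" "Lindelof_in X B"
  shows "Lindelof_in X (A \<union> B)"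
  using Lin_Union[of "{A,B}" X] assms by auto

lemma Lin_empty: "Lindelof_in X {}"
  unfolding Lindelof_in_def by (simp add: Lindelof_space_topspace_empty)

lemma Lin_cover:
  assumes "Lindelof_in X L" "\<And>U. U \<in> \<U> \<Longrightarrow> openin X U" "L \<subseteq> \<Union>\<U>"
  shows "\<exists>\<V>. countable \<V> \<and> \<V> \<subseteq> \<U> \<and> L \<subseteq> \<Union>\<V>"
  using assms Lindelof_space_subtopology_subset[of L X] unfolding Lindelof_in_def by blast

lemma Lin_closed_subset:
  assumes "Lindelof_in X L" "closedin X F" "F \<subseteq> L"
  shows "Lindelof_in X F"
proof -
  have "closedin (subtopology X L) F"
    using assms closedin_subset_topspace by blast
  then have "Lindelof_space (subtopology (subtopology X L) F)"
    using assms(1) Lindelof_space_closedin_subtopology unfolding Lindelof_in_def by blast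
  then show ?thesis using assms closedin_subset unfolding Lindelof_in_def
    by (simp add: subtopology_subtopology Int_absorb1)
qed

lemma Lin_top: "Lindelof_in X (topspace X) \<longleftrightarrow> Lindelof_space X"
  unfolding Lindelof_in_def by (simp add: subtopology_topspace)




definition big :: "'a topology \<Rightarrow> 'b topology \<Rightarrow> ('a \<Rightarrow> 'b) \<Rightarrow> 'b \<Rightarrow> bool" where
  "big X Y f y0 \<longleftrightarrow> (\<forall>W. openin Y W \<and> y0 \<in> W \<longrightarrow>
      \<not> Lindelof_in X {x \<in> topspace X. f x \<in> Y closure_of W})"

lemma big_imp_EC:
  assumes P: "\<And>\<F>. countable \<F> \<Longrightarrow> \<F> \<noteq> {} \<Longrightarrow>
           (\<forall>F\<in>\<F>. closedin X F \<and> \<not> Lindelof_in X F) \<Longrightarrow>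
           \<not> Lindelof_in X (\<Inter>\<F>)"
    and reg: "regular_space Y" and gd: "G_delta_points Y"
    and f: "continuous_map X Y f" and nL: "\<not> Lindelof_space X"
    and y0: "y0 \<in> topspace Y" and bg: "big X Y f y0"
  shows "\<exists>Z. Lindelof_in X Z \<and> (\<exists>y. f ` (topspace X - Z) = {y})"
proof -
  have "gdelta_in Y {y0}" using gd y0 unfolding G_delta_points_def by blast
  then obtain T where T: "countable T" "\<And>V. V \<in> T \<Longrightarrow> openin Y V" "\<Inter>T = {y0}"
    unfolding gdelta_in_alt intersection_of_def by blast
  define Z where "Z = {x \<in> topspace X. f x \<noteq> y0}"
  have Zeq: "Z = \<Union> ((\<lambda>V. {x \<in> topspace X. f x \<in> topspace Y - V}) ` T)"
  proof -
    have fx: "\<And>x. x \<in> topspace X \<Longrightarrow> f x \<in> topspace Y"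
      using f by (simp add: continuous_map_def Pi_iff)
    have iff: "\<And>y. y \<in> \<Inter>T \<longleftrightarrow> y = y0" using T(3) by simp
    have "\<And>y. y \<noteq> y0 \<longleftrightarrow> (\<exists>V\<in>T. y \<notin> V)" using iff by blast
    then show ?thesis unfolding Z_def using fx by blast
  qed
  have "Lindelof_in X {x \<in> topspace X. f x \<in> topspace Y - V}" if V: "V \<in> T" for V
  proof (rule ccontr)
    assume nl: "\<not> ?thesis"
    have "y0 \<in> V" using T(3) V by auto
    moreover have "closedin Y (topspace Y - V)" using T(2) V by auto
    ultimately obtain W where W: "openin Y W" "y0 \<in> W" "disjnt (topspace Y - V) (Y closure_of W)"
      using reg y0 unfolding regular_space by blast
    let ?A = "{x \<in> topspace X. f x \<in> topspace Y - V}"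
    let ?B = "{x \<in> topspace X. f x \<in> Y closure_of W}"
    have cA: "closedin X ?A" using f \<open>closedin Y (topspace Y - V)\<close> closedin_continuous_map_preimage by blast
    have cB: "closedin X ?B" using f closedin_continuous_map_preimage closedin_closure_of by blast
    have "\<not> Lindelof_in X ?B" using bg W unfolding big_def by blast
    moreover have "?A \<inter> ?B = {}" using W(3) closure_of_subset_topspace[of Y W]
      unfolding disjnt_def by auto
    ultimately show False
      using P[of "{?A, ?B}"] cA cB nl Lin_empty by auto
  qed
  then have LZ: "Lindelof_in X Z" unfolding Zeq using T(1) by (intro Lin_Union) auto
  have "topspace X - Z \<noteq> {}"
  proof
    assume "topspace X - Z = {}"
    then have "Z = topspace X" unfolding Z_def by auto
    then show False using LZ nL Lin_top by metis
  qed
  then have "f ` (topspace X - Z) = {y0}" unfolding Z_def by auto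
  then show ?thesis using LZ by blast
qed

lemma Xbig_imp_big:
  assumes f: "continuous_map X Y f" and x0: "x0 \<in> topspace X"
    and xb: "\<And>G L. openin X G \<Longrightarrow> x0 \<in> G \<Longrightarrow> Lindelof_in X L \<Longrightarrow> \<not> G \<subseteq> L"
  shows "f x0 \<in> topspace Y \<and> big X Y f (f x0)"
proof -
  have "f x0 \<in> topspace Y" using f x0 by (simp add: continuous_map_def Pi_iff)
  moreover have "big X Y f (f x0)"
    unfolding big_def
  proof (intro allI impI notI)
    fix W assume W: "openin Y W \<and> f x0 \<in> W"
      and L: "Lindelof_in X {x \<in> topspace X. f x \<in> Y closure_of W}"
    have "openin X {x \<in> topspace X. f x \<in> W}"
      using f W openin_continuous_map_preimage by blast
    moreover have "{x \<in> topspace X. f x \<in> W} \<subseteq> {x \<in> topspace X. f x \<in> Y closure_of W}"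
      using closure_of_subset[of W Y] W openin_subset by blast
    moreover have "x0 \<in> {x \<in> topspace X. f x \<in> W}" using x0 W by blast
    ultimately show False using xb[OF _ _ L] by blast
  qed
  ultimately show ?thesis by blast
qed




lemma chain_imp_big:
  assumes P: "\<And>\<F>. countable \<F> \<Longrightarrow> \<F> \<noteq> {} \<Longrightarrow>
           (\<forall>F\<in>\<F>. closedin X F \<and> \<not> Lindelof_in X F) \<Longrightarrow>
           \<not> Lindelof_in X (\<Inter>\<F>)"
    and f: "continuous_map X Y f" and ne: "topspace X \<noteq> {}"
    and VP: "\<And>E. E \<in> \<V> \<Longrightarrow> openin X E \<and> \<not> Lindelof_in X (topspace X - E)"
    and ch: "\<And>A B. A \<in> \<V> \<Longrightarrow> B \<in> \<V> \<Longrightarrow> A \<subseteq> B \<or> B \<subseteq> A"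
    and cov: "\<Union>\<V> = topspace X" and card: "\<V> \<lesssim> K"
    and comp: "aleph0_kappa_compact Y K"
  shows "\<exists>y0 \<in> topspace Y. big X Y f y0"
proof -
  have fx: "\<And>x. x \<in> topspace X \<Longrightarrow> f x \<in> topspace Y"
    using f by (simp add: continuous_map_def Pi_iff)
  define D where "D E = Y closure_of (f ` (topspace X - E))" for E
  have Vne: "\<V> \<noteq> {}" using cov ne by (metis Union_empty)
  have Pint: "\<exists>x. x \<in> topspace X \<and> (\<forall>E\<in>\<V>0. x \<notin> E)" if "countable \<V>0" "\<V>0 \<subseteq> \<V>" "\<V>0 \<noteq> {}" for \<V>0
  proof -
    let ?F = "(\<lambda>E. topspace X - E) ` \<V>0"
    have "\<not> Lindelof_in X (\<Inter>?F)"
      using that VP by (intro P) (auto simp: openin_closedin_eq)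
    then have "\<Inter>?F \<noteq> {}" using Lin_empty by metis
    then obtain x where "x \<in> \<Inter>?F" by blast
    then show ?thesis using that(3) by auto
  qed
  have "\<exists>y0. \<forall>E\<in>\<V>. y0 \<in> D E"
  proof (rule ccontr)
    assume "\<not> ?thesis"
    then have nn: "\<And>y. \<exists>E\<in>\<V>. y \<notin> D E" by blast
    let ?U = "(\<lambda>E. topspace Y - D E) ` \<V>"
    have "\<forall>U\<in>?U. openin Y U" unfolding D_def by auto
    moreover have "\<Union>?U = topspace Y"
    proof
      show "\<Union>?U \<subseteq> topspace Y" by blast
      show "topspace Y \<subseteq> \<Union>?U"
      proof
        fix y assume "y \<in> topspace Y"
        moreover obtain E where "E \<in> \<V>" "y \<notin> D E" using nn by blast
        ultimately show "y \<in> \<Union>?U" by blast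
      qed
    qed
    moreover have "?U \<lesssim> K" by (rule lepoll_trans[OF image_lepoll card])
    ultimately have prem: "(\<forall>U\<in>?U. openin Y U) \<and> \<Union>?U = topspace Y \<and> ?U \<lesssim> K"
      by (intro conjI)
    have "(\<forall>U\<in>?U. openin Y U) \<and> \<Union>?U = topspace Y \<and> ?U \<lesssim> K
        \<longrightarrow> (\<exists>\<W>. countable \<W> \<and> \<W> \<subseteq> ?U \<and> \<Union>\<W> = topspace Y)"
      using comp unfolding aleph0_kappa_compact_def by (rule spec)
    then have "\<exists>\<W>. countable \<W> \<and> \<W> \<subseteq> ?U \<and> \<Union>\<W> = topspace Y"
      using prem by (rule mp)
    then obtain \<W> where W0: "countable \<W> \<and> \<W> \<subseteq> ?U \<and> \<Union>\<W> = topspace Y" ..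
    note W = conjunct1[OF W0] conjunct1[OF conjunct2[OF W0]] conjunct2[OF conjunct2[OF W0]]
    have "\<exists>\<V>0. countable \<V>0 \<and> \<V>0 \<subseteq> \<V> \<and> \<W> = (\<lambda>E. topspace Y - D E) ` \<V>0"
      by (rule countable_subset_image[THEN iffD1, OF conjI[OF W(1) W(2)]])
    then obtain \<V>0 where V00: "countable \<V>0 \<and> \<V>0 \<subseteq> \<V> \<and> \<W> = (\<lambda>E. topspace Y - D E) ` \<V>0" ..
    note V0 = conjunct1[OF V00] conjunct1[OF conjunct2[OF V00]] conjunct2[OF conjunct2[OF V00]]
    obtain x0 where "x0 \<in> topspace X" using ne by blast
    then have fx0: "f x0 \<in> topspace Y" by (rule fx)
    have "\<V>0 \<noteq> {}"
    proof
      assume "\<V>0 = {}"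
      then have "\<W> = {}" using V0(3) by simp
      then show False using W(3) fx0 by simp
    qed
    then obtain x where x: "x \<in> topspace X" "\<forall>E\<in>\<V>0. x \<notin> E" using Pint[OF V0(1) V0(2)] by blast
    have "f x \<in> topspace Y" using x(1) by (rule fx)
    then have "f x \<in> \<Union>\<W>" unfolding W(3) .
    then have "f x \<in> \<Union>((\<lambda>E. topspace Y - D E) ` \<V>0)" unfolding V0(3) .
    then obtain E where E: "E \<in> \<V>0" "f x \<notin> D E" by blast
    have "f ` (topspace X - E) \<subseteq> topspace Y" using fx by blast
    then have "f ` (topspace X - E) \<subseteq> D E" unfolding D_def by (rule closure_of_subset)
    moreover have "f x \<in> f ` (topspace X - E)" using x E(1) by blast
    ultimately have "f x \<in> D E" by (rule subsetD)
    then show False using E by blast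
  qed
  then obtain y0 where y0: "\<forall>E\<in>\<V>. y0 \<in> D E" by blast
  have y0Y: "y0 \<in> topspace Y"
  proof -
    obtain E where "E \<in> \<V>" using Vne by blast
    then have "y0 \<in> D E" using y0 by blast
    then show ?thesis unfolding D_def by (rule subsetD[OF closure_of_subset_topspace])
  qed
  have "big X Y f y0"
    unfolding big_def
  proof (intro allI impI notI)
    fix W assume W: "openin Y W \<and> y0 \<in> W"
    let ?L = "{x \<in> topspace X. f x \<in> Y closure_of W}"
    assume L: "Lindelof_in X ?L"
    have "?L \<subseteq> \<Union>\<V>" using cov by blast
    then obtain \<V>0 where V0: "countable \<V>0" "\<V>0 \<subseteq> \<V>" "?L \<subseteq> \<Union>\<V>0"
      using Lin_cover[OF L, of \<V>] VP by blast
    have "\<exists>E\<in>\<V>. ?L \<subseteq> E"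
    proof (cases "\<V>0 = {}")
      case True
      then show ?thesis using V0 Vne by auto
    next
      case False
      then obtain x where x: "x \<in> topspace X" "\<forall>E\<in>\<V>0. x \<notin> E" using Pint[OF V0(1) V0(2)] by blast
      then obtain E where E: "E \<in> \<V>" "x \<in> E" using cov by blast
      have "\<forall>E'\<in>\<V>0. E' \<subseteq> E"
      proof
        fix E' assume "E' \<in> \<V>0"
        then have "E' \<in> \<V>" "x \<notin> E'" using V0(2) x by auto
        then show "E' \<subseteq> E" using ch[OF E(1), of E'] E(2) by blast
      qed
      then show ?thesis using V0(3) E by blast
    qed
    then obtain E where E: "E \<in> \<V>" "?L \<subseteq> E" by blast
    have WY: "W \<subseteq> topspace Y" using W openin_subset by blast
    have "f ` (topspace X - E) \<subseteq> topspace Y - W"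
    proof
      fix y assume "y \<in> f ` (topspace X - E)"
      then obtain x where x: "x \<in> topspace X" "x \<notin> E" "y = f x" by blast
      then have "f x \<notin> Y closure_of W" using E(2) by blast
      then show "y \<in> topspace Y - W" using x fx closure_of_subset[OF WY] by blast
    qed
    then have "D E \<subseteq> topspace Y - W"
      unfolding D_def using W by (intro closure_of_minimal) auto
    then show False using y0 E(1) W by blast
  qed
  then show ?thesis using y0Y by blast
qed




lemma chain_exists:
  assumes nL: "\<not> Lindelof_space X"
    and sm: "\<And>x. x \<in> topspace X \<Longrightarrow> \<exists>G L. openin X G \<and> x \<in> G \<and> Lindelof_in X L \<and> G \<subseteq> L"
  shows "\<exists>\<C>. (\<forall>E\<in>\<C>. openin X E \<and> \<not> Lindelof_in X (topspace X - E)) \<and>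
             (\<forall>A\<in>\<C>. \<forall>B\<in>\<C>. A \<subseteq> B \<or> B \<subseteq> A) \<and> \<Union>\<C> = topspace X"
proof -
  define \<P> where "\<P> = {E. openin X E \<and> \<not> Lindelof_in X (topspace X - E)}"
  obtain M where M: "subset.maxchain \<P> M" using subset.Hausdorff by blast
  have MP: "M \<subseteq> \<P>" and Mch: "\<And>A B. A \<in> M \<Longrightarrow> B \<in> M \<Longrightarrow> A \<subseteq> B \<or> B \<subseteq> A"
    using M unfolding subset.maxchain_def subset.chain_def by auto
  have Mmax: "\<not> (\<exists>S. subset.chain \<P> S \<and> M \<subset> S)"
    using M unfolding subset.maxchain_def by blast
  define U where "U = \<Union>M"
  have Uo: "openin X U" unfolding U_def using MP \<P>_def by auto
  have notLtop: "\<not> Lindelof_in X (topspace X)" using nL Lin_top by metis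
  have enl: "\<not> Lindelof_in X (topspace X - (E \<union> G))"
    if "openin X E" "\<not> Lindelof_in X (topspace X - E)" "Lindelof_in X L" "G \<subseteq> L" for E G L
  proof
    assume a: "Lindelof_in X (topspace X - (E \<union> G))"
    have "Lindelof_in X ((topspace X - (E \<union> G)) \<union> L)" using a that(3) by (rule Lin_Un)
    moreover have "closedin X (topspace X - E)" using that(1) by auto
    moreover have "topspace X - E \<subseteq> (topspace X - (E \<union> G)) \<union> L" using that(4) by blast
    ultimately have "Lindelof_in X (topspace X - E)" by (rule Lin_closed_subset)
    then show False using that(2) by blast
  qed
  show ?thesis
  proof (cases "Lindelof_in X (topspace X - U)")
    case True
    have "M \<noteq> {}"
    proof
      assume "M = {}"
      then have "U = {}" unfolding U_def by simp
      then show False using True notLtop by simp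
    qed
    obtain G L where GL: "\<And>x. x \<in> topspace X \<Longrightarrow> openin X (G x) \<and> x \<in> G x \<and> Lindelof_in X (L x) \<and> G x \<subseteq> L x"
      using sm by metis
    have "topspace X - U \<subseteq> \<Union>(G ` (topspace X - U))" using GL by blast
    then obtain \<V> where V: "countable \<V>" "\<V> \<subseteq> G ` (topspace X - U)" "topspace X - U \<subseteq> \<Union>\<V>"
      using Lin_cover[OF True, of "G ` (topspace X - U)"] GL by blast
    then obtain S where S: "countable S" "S \<subseteq> topspace X - U" "\<V> = G ` S"
      using countable_subset_image[THEN iffD1, OF conjI[OF V(1) V(2)]] by blast
    define V where "V = \<Union>(G ` S)"
    define LV where "LV = \<Union>(L ` S)"
    have Vo: "openin X V" unfolding V_def using GL S(2) by auto
    have LV: "Lindelof_in X LV" unfolding LV_def using S GL by (intro Lin_Union) auto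
    have VLV: "V \<subseteq> LV" unfolding V_def LV_def using GL S(2) by blast
    have cov: "topspace X - U \<subseteq> V" using V(3) S(3) unfolding V_def by simp
    let ?C = "(\<lambda>E. E \<union> V) ` M"
    have C1: "\<forall>E\<in>?C. openin X E \<and> \<not> Lindelof_in X (topspace X - E)"
    proof
      fix E assume "E \<in> ?C"
      then obtain E0 where E0: "E0 \<in> M" "E = E0 \<union> V" by blast
      then have "E0 \<in> \<P>" using MP by blast
      then have "openin X E0" "\<not> Lindelof_in X (topspace X - E0)" unfolding \<P>_def by auto
      then show "openin X E \<and> \<not> Lindelof_in X (topspace X - E)"
        using E0(2) Vo enl[OF _ _ LV VLV] by auto
    qed
    have C2: "\<forall>A\<in>?C. \<forall>B\<in>?C. A \<subseteq> B \<or> B \<subseteq> A"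
    proof (intro ballI)
      fix A B assume "A \<in> ?C" "B \<in> ?C"
      then obtain A0 B0 where AB: "A0 \<in> M" "B0 \<in> M" "A = A0 \<union> V" "B = B0 \<union> V" by blast
      have "A0 \<subseteq> B0 \<or> B0 \<subseteq> A0" using Mch[OF AB(1,2)] .
      then show "A \<subseteq> B \<or> B \<subseteq> A" unfolding AB(3,4) by blast
    qed
    have "\<Union>?C = U \<union> V" unfolding U_def using \<open>M \<noteq> {}\<close> by blast
    moreover have "U \<subseteq> topspace X" using Uo openin_subset by blast
    moreover have "V \<subseteq> topspace X" using Vo openin_subset by blast
    moreover have "U \<union> V = topspace X" using cov calculation(2,3) by blast
    ultimately have C3: "\<Union>?C = topspace X" by simp
    show ?thesis by (intro exI[of _ ?C] conjI C1 C2 C3)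
  next
    case False
    have "U = topspace X"
    proof (rule ccontr)
      assume "U \<noteq> topspace X"
      then obtain x where x: "x \<in> topspace X" "x \<notin> U" using Uo openin_subset by blast
      then obtain G L where GL: "openin X G" "x \<in> G" "Lindelof_in X L" "G \<subseteq> L" using sm by blast
      let ?E = "U \<union> G"
      have "?E \<in> \<P>" unfolding \<P>_def using Uo GL enl[OF Uo False GL(3,4)] by auto
      have "subset.chain \<P> (insert ?E M)"
        unfolding subset.chain_def using MP Mch \<open>?E \<in> \<P>\<close> unfolding U_def by auto
      moreover have "?E \<notin> M" using x GL unfolding U_def by blast
      then have "M \<subset> insert ?E M" by blast
      ultimately show False using Mmax by blast
    qed
    then have "\<Union>M = topspace X" unfolding U_def .
    moreover have "\<forall>E\<in>M. openin X E \<and> \<not> Lindelof_in X (topspace X - E)" using MP unfolding \<P>_def by blast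
    moreover have "\<forall>A\<in>M. \<forall>B\<in>M. A \<subseteq> B \<or> B \<subseteq> A" using Mch by blast
    ultimately show ?thesis by blast
  qed
qed


theorem theorem3p12:
  fixes X :: "'a topology" and Y :: "'b topology" and K :: "'k set"
  assumes "Hausdorff_space X" and "Hausdorff_space Y"
    and "\<And>\<F>. countable \<F> \<Longrightarrow> \<F> \<noteq> {} \<Longrightarrow>
           (\<forall>F\<in>\<F>. closedin X F \<and> \<not> Lindelof_in X F) \<Longrightarrow>
           \<not> Lindelof_in X (\<Inter>\<F>)"
    and "is_linear_Lindelof_number X K"
    and "regular_space Y" and "aleph0_kappa_compact Y K" and "G_delta_points Y"
  shows "EC X Y"
  unfolding EC_def
proof (intro impI allI)
  assume nL: "\<not> Lindelof_space X"
  fix f assume f: "continuous_map X Y f"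
  have ne: "topspace X \<noteq> {}" using nL Lindelof_space_topspace_empty by blast
  have "\<exists>y0\<in>topspace Y. big X Y f y0"
  proof (cases "\<exists>x0\<in>topspace X. \<forall>G L. openin X G \<longrightarrow> x0 \<in> G \<longrightarrow> Lindelof_in X L \<longrightarrow> \<not> G \<subseteq> L")
    case True
    then obtain x0 where x0: "x0 \<in> topspace X"
      and xb: "\<And>G L. openin X G \<Longrightarrow> x0 \<in> G \<Longrightarrow> Lindelof_in X L \<Longrightarrow> \<not> G \<subseteq> L" by blast
    show ?thesis using Xbig_imp_big[OF f x0 xb] by blast
  next
    case False
    then have sm: "\<And>x. x \<in> topspace X \<Longrightarrow> \<exists>G L. openin X G \<and> x \<in> G \<and> Lindelof_in X L \<and> G \<subseteq> L"
      by blast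
    obtain \<C> where C: "\<forall>E\<in>\<C>. openin X E \<and> \<not> Lindelof_in X (topspace X - E)"
      "\<forall>A\<in>\<C>. \<forall>B\<in>\<C>. A \<subseteq> B \<or> B \<subseteq> A" "\<Union>\<C> = topspace X"
      using chain_exists[OF nL sm] by auto
    have lcb: "linear_cover_bound X K" using assms(4) unfolding is_linear_Lindelof_number_def by blast
    have "(\<forall>U\<in>\<C>. openin X U) \<and> \<Union>\<C> = topspace X \<and> (\<forall>A\<in>\<C>. \<forall>B\<in>\<C>. A \<subseteq> B \<or> B \<subseteq> A)"
      using C by blast
    moreover have "(\<forall>U\<in>\<C>. openin X U) \<and> \<Union>\<C> = topspace X \<and> (\<forall>A\<in>\<C>. \<forall>B\<in>\<C>. A \<subseteq> B \<or> B \<subseteq> A)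
        \<longrightarrow> (\<exists>\<V>. \<V> \<subseteq> \<C> \<and> \<Union>\<V> = topspace X \<and> \<V> \<lesssim> K)"
      using lcb unfolding linear_cover_bound_def by (rule spec)
    ultimately have "\<exists>\<V>. \<V> \<subseteq> \<C> \<and> \<Union>\<V> = topspace X \<and> \<V> \<lesssim> K"
      by (rule rev_mp)
    then obtain \<V> where V0: "\<V> \<subseteq> \<C> \<and> \<Union>\<V> = topspace X \<and> \<V> \<lesssim> K" ..
    note V1 = conjunct1[OF V0] and V2 = conjunct1[OF conjunct2[OF V0]] and V3 = conjunct2[OF conjunct2[OF V0]]
    show ?thesis
    proof (rule chain_imp_big[OF assms(3) f ne _ _ V2 V3 assms(6)])
      fix E assume "E \<in> \<V>"
      then show "openin X E \<and> \<not> Lindelof_in X (topspace X - E)" using C(1) V1 by blast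
    next
      fix A B assume "A \<in> \<V>" "B \<in> \<V>"
      then show "A \<subseteq> B \<or> B \<subseteq> A" using C(2) V1 by blast
    qed
  qed
  then obtain y0 where "y0 \<in> topspace Y" "big X Y f y0" by blast
  then show "\<exists>Z. Lindelof_in X Z \<and> (\<exists>y. f ` (topspace X - Z) = {y})"
    using big_imp_EC[OF assms(3) assms(5) assms(7) f nL] by blast
qed

end
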